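(* Let $\mathcal{A}$ be a Hopf algebra over $\mathbb{C}$ whose antipode $S$ satisfies $S^2=\mathrm{id}$, let $\Pi_\phi$ be a representation of $\mathcal{A}$ on $V$ and $|\phi_r\rangle\in V$. Define $\mathcal{T}_r=\{a\in\mathcal{A}:(\mathrm{id}\otimes\Pi_\phi)\Delta(a)(1\otimes|\phi_r\rangle)=a\otimes|\phi_r\rangle\}$ and $\mathcal{T}_l=\{a\in\mathcal{A}:(\Pi_\phi\otimes\mathrm{id})\Delta(a)(|\phi_r\rangle\otimes1)=|\phi_r\rangle\otimes a\}$. Then $S(\mathcal{T}_l)=\mathcal{T}_r$ and $S(\mathcal{T}_r)=\mathcal{T}_l$.
   Context: With $\Delta(a)=\sum a^{(1)}\otimes a^{(2)}$, $(\mathrm{id}\otimes\Pi_\phi)\Delta(a)(1\otimes|\phi_r\rangle)=\sum a^{(1)}\otimes\Pi_\phi(a^{(2)})|\phi_r\rangle\in\mathcal{A}\otimes V$ and $(\Pi_\phi\otimes\mathrm{id})\Delta(a)(|\phi_r\rangle\otimes1)=\sum \Pi_\phi(a^{(1)})|\phi_r\rangle\otimes a^{(2)}\in V\otimes\mathcal{A}$. *)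

theory Defs
  imports "HOL-Analysis.Analysis"
begin

text \<open>Elements of an algebraic tensor product X (x) Y are represented by finite lists of pairs
(finite sums of elementary tensors).  Two such sums denote the same tensor iff they agree under
all functionals f (x) g with f, g complex-linear functionals (these separate points of the
algebraic tensor product over a field).\<close>

definition cfun_lin :: "(complex \<Rightarrow> 'x::ab_group_add \<Rightarrow> 'x) \<Rightarrow> ('x \<Rightarrow> complex) \<Rightarrow> bool" where
  "cfun_lin sX f \<longleftrightarrow> Vector_Spaces.linear sX (*) f"

definition teq2 :: "(complex \<Rightarrow> 'x::ab_group_add \<Rightarrow> 'x) \<Rightarrow> (complex \<Rightarrow> 'y::ab_group_add \<Rightarrow> 'y)
     \<Rightarrow> ('x \<times> 'y) list \<Rightarrow> ('x \<times> 'y) list \<Rightarrow> bool" where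
  "teq2 sX sY t u \<longleftrightarrow>
     (\<forall>f g. cfun_lin sX f \<and> cfun_lin sY g \<longrightarrow>
        (\<Sum>(x,y)\<leftarrow>t. f x * g y) = (\<Sum>(x,y)\<leftarrow>u. f x * g y))"

definition teq3 :: "(complex \<Rightarrow> 'x::ab_group_add \<Rightarrow> 'x) \<Rightarrow> (complex \<Rightarrow> 'y::ab_group_add \<Rightarrow> 'y) \<Rightarrow> (complex \<Rightarrow> 'z::ab_group_add \<Rightarrow> 'z)
     \<Rightarrow> ('x \<times> 'y \<times> 'z) list \<Rightarrow> ('x \<times> 'y \<times> 'z) list \<Rightarrow> bool" where
  "teq3 sX sY sZ t u \<longleftrightarrow>
     (\<forall>f g h. cfun_lin sX f \<and> cfun_lin sY g \<and> cfun_lin sZ h \<longrightarrow>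
        (\<Sum>(x,y,z)\<leftarrow>t. f x * g y * h z) = (\<Sum>(x,y,z)\<leftarrow>u. f x * g y * h z))"

definition complex_algebra :: "(complex \<Rightarrow> 'a::ring_1 \<Rightarrow> 'a) \<Rightarrow> bool" where
  "complex_algebra sA \<longleftrightarrow> vector_space sA \<and>
     (\<forall>c x y. sA c (x * y) = sA c x * y \<and> sA c (x * y) = x * sA c y)"

definition hopf_algebra :: "(complex \<Rightarrow> 'a::ring_1 \<Rightarrow> 'a) \<Rightarrow> ('a \<Rightarrow> ('a \<times> 'a) list)
     \<Rightarrow> ('a \<Rightarrow> complex) \<Rightarrow> ('a \<Rightarrow> 'a) \<Rightarrow> bool" where
  "hopf_algebra sA \<Delta> \<epsilon> S \<longleftrightarrow>
     complex_algebra sA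
     \<comment> \<open>coproduct is linear\<close>
     \<and> (\<forall>x y. teq2 sA sA (\<Delta> (x + y)) (\<Delta> x @ \<Delta> y))
     \<and> (\<forall>c x. teq2 sA sA (\<Delta> (sA c x)) (map (\<lambda>(u,v). (sA c u, v)) (\<Delta> x)))
     \<comment> \<open>coassociativity: (Delta (x) id) Delta = (id (x) Delta) Delta\<close>
     \<and> (\<forall>a. teq3 sA sA sA
           (concat (map (\<lambda>(a1,a2). map (\<lambda>(b,c). (b,c,a2)) (\<Delta> a1)) (\<Delta> a)))
           (concat (map (\<lambda>(a1,a2). map (\<lambda>(b,c). (a1,b,c)) (\<Delta> a2)) (\<Delta> a))))
     \<comment> \<open>counit: linear, and (eps (x) id) Delta = id = (id (x) eps) Delta\<close>
     \<and> Vector_Spaces.linear sA (*) \<epsilon>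
     \<and> (\<forall>a. (\<Sum>(a1,a2)\<leftarrow>\<Delta> a. sA (\<epsilon> a1) a2) = a)
     \<and> (\<forall>a. (\<Sum>(a1,a2)\<leftarrow>\<Delta> a. sA (\<epsilon> a2) a1) = a)
     \<comment> \<open>Delta and eps are unital algebra homomorphisms\<close>
     \<and> (\<forall>x y. teq2 sA sA (\<Delta> (x * y))
           (concat (map (\<lambda>(x1,x2). map (\<lambda>(y1,y2). (x1 * y1, x2 * y2)) (\<Delta> y)) (\<Delta> x))))
     \<and> teq2 sA sA (\<Delta> 1) [(1, 1)]
     \<and> (\<forall>x y. \<epsilon> (x * y) = \<epsilon> x * \<epsilon> y)
     \<and> \<epsilon> 1 = 1
     \<comment> \<open>antipode: linear, m (S (x) id) Delta = eta eps = m (id (x) S) Delta\<close>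
     \<and> Vector_Spaces.linear sA sA S
     \<and> (\<forall>a. (\<Sum>(a1,a2)\<leftarrow>\<Delta> a. S a1 * a2) = sA (\<epsilon> a) 1)
     \<and> (\<forall>a. (\<Sum>(a1,a2)\<leftarrow>\<Delta> a. a1 * S a2) = sA (\<epsilon> a) 1)"

definition representation :: "(complex \<Rightarrow> 'a::ring_1 \<Rightarrow> 'a) \<Rightarrow> (complex \<Rightarrow> 'v::ab_group_add \<Rightarrow> 'v)
     \<Rightarrow> ('a \<Rightarrow> 'v \<Rightarrow> 'v) \<Rightarrow> bool" where
  "representation sA sV \<rho> \<longleftrightarrow>
     vector_space sV
     \<and> (\<forall>a. Vector_Spaces.linear sV sV (\<rho> a))
     \<and> (\<forall>x y v. \<rho> (x + y) v = \<rho> x v + \<rho> y v)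
     \<and> (\<forall>c x v. \<rho> (sA c x) v = sV c (\<rho> x v))
     \<and> (\<forall>x y v. \<rho> (x * y) v = \<rho> x (\<rho> y v))
     \<and> (\<forall>v. \<rho> 1 v = v)"

definition T_r :: "(complex \<Rightarrow> 'a::ring_1 \<Rightarrow> 'a) \<Rightarrow> (complex \<Rightarrow> 'v::ab_group_add \<Rightarrow> 'v)
     \<Rightarrow> ('a \<Rightarrow> ('a \<times> 'a) list) \<Rightarrow> ('a \<Rightarrow> 'v \<Rightarrow> 'v) \<Rightarrow> 'v \<Rightarrow> 'a set" where
  "T_r sA sV \<Delta> \<rho> \<phi> = {a. teq2 sA sV (map (\<lambda>(a1,a2). (a1, \<rho> a2 \<phi>)) (\<Delta> a)) [(a, \<phi>)]}"

definition T_l :: "(complex \<Rightarrow> 'a::ring_1 \<Rightarrow> 'a) \<Rightarrow> (complex \<Rightarrow> 'v::ab_group_add \<Rightarrow> 'v)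
     \<Rightarrow> ('a \<Rightarrow> ('a \<times> 'a) list) \<Rightarrow> ('a \<Rightarrow> 'v \<Rightarrow> 'v) \<Rightarrow> 'v \<Rightarrow> 'a set" where
  "T_l sA sV \<Delta> \<rho> \<phi> = {a. teq2 sV sA (map (\<lambda>(a1,a2). (\<rho> a1 \<phi>, a2)) (\<Delta> a)) [(\<phi>, a)]}"

end

theory Submission
  imports Defs
begin


definition lin :: "(complex \<Rightarrow> 'x::ab_group_add \<Rightarrow> 'x) \<Rightarrow> ('x \<Rightarrow> complex) \<Rightarrow> bool" where
  "lin s f \<longleftrightarrow> (\<forall>x y. f (x + y) = f x + f y) \<and> (\<forall>c x. f (s c x) = c * f x)"

lemma vs_complex: "vector_space ((*) :: complex \<Rightarrow> complex \<Rightarrow> complex)"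
  by unfold_locales (auto simp: algebra_simps)

lemma cfun_lin_iff: "vector_space s \<Longrightarrow> cfun_lin s f \<longleftrightarrow> lin s f"
  unfolding cfun_lin_def lin_def Vector_Spaces.linear_iff using vs_complex by auto

lemma lin_zero: "lin s f \<Longrightarrow> f 0 = 0"
  unfolding lin_def by (metis add_cancel_right_right add_0)

lemma lin_finsum: "lin s f \<Longrightarrow> f (\<Sum>e\<in>E. s (a e) (g e)) = (\<Sum>e\<in>E. a e * f (g e))"
proof (induct E rule: infinite_finite_induct)
  case (infinite A) then show ?case using lin_zero by auto
next
  case empty then show ?case using lin_zero by auto
next
  case (insert x F) then show ?case by (simp add: lin_def)
qed

lemma sum_list_sum_swap: "(\<Sum>p\<leftarrow>t. \<Sum>e\<in>E. g p e) = (\<Sum>e\<in>E. \<Sum>p\<leftarrow>t. g p e)"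
  by (induct t) (simp_all add: sum.distrib)

lemma coords:
  assumes vs: "vector_space s" and fin: "finite V"
  obtains E c where "finite E" "\<forall>e\<in>E. lin s (c e)" "\<forall>x\<in>V. x = (\<Sum>e\<in>E. s (c e x) e)"
proof -
  interpret vs: vector_space s by (rule vs)
  interpret vp: vector_space_pair s "(*) :: complex \<Rightarrow> complex \<Rightarrow> complex"
    by (simp add: vector_space_pair_def vs vs_complex)
  obtain B where B: "B \<subseteq> vs.span V" "vs.independent B" "vs.span V \<subseteq> vs.span B"
    using vs.basis_exists[of "vs.span V"] by metis
  have finB: "finite B"
    using vs.independent_span_bound[OF fin B(2)] B(1) by auto
  define c where "c e = vp.construct B (\<lambda>b. if b = e then 1 else 0)" for e
  have linc: "lin s (c e)" for e
    using vp.linear_construct[OF B(2)] unfolding c_def Vector_Spaces.linear_iff lin_def by auto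
  have cb: "c e b = (if b = e then 1 else 0)" if "b \<in> B" for e b
    unfolding c_def using vp.construct_basis[OF B(2) that] by simp
  have "x = (\<Sum>e\<in>B. s (c e x) e)" if "x \<in> V" for x
  proof -
    have "x \<in> vs.span B" using that B(3) vs.span_superset by blast
    then obtain u where u: "x = (\<Sum>v\<in>B. s (u v) v)"
      using vs.span_finite[OF finB] by auto
    have "c e x = u e" if "e \<in> B" for e
    proof -
      have "c e x = (\<Sum>v\<in>B. u v * c e v)" using u lin_finsum[OF linc] by simp
      also have "\<dots> = (\<Sum>v\<in>B. if v = e then u v else 0)"
        by (rule sum.cong) (auto simp: cb)
      also have "\<dots> = u e" using that finB by simp
      finally show ?thesis .
    qed
    then show ?thesis using u by (auto intro!: sum.cong)
  qed
  then show ?thesis using that[of B c] finB linc by blast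
qed

lemma E2:
  assumes vX: "vector_space sX" and vY: "vector_space sY" and t: "teq2 sX sY t u"
    and l1: "\<And>y. lin sX (\<lambda>x. B x y)" and l2: "\<And>x. lin sY (B x)"
  shows "(\<Sum>(x,y)\<leftarrow>t. B x y) = (\<Sum>(x,y)\<leftarrow>u. B x y)"
proof -
  obtain E c where E: "finite E" "\<forall>e\<in>E. lin sX (c e)" "\<forall>x\<in>fst ` set (t @ u). x = (\<Sum>e\<in>E. sX (c e x) e)"
    using coords[OF vX, of "fst ` set (t @ u)"] by blast
  have dec: "B x y = (\<Sum>e\<in>E. c e x * B e y)" if "x \<in> fst ` set (t @ u)" for x y
  proof -
    have "B x y = B (\<Sum>e\<in>E. sX (c e x) e) y" using E(3) that by metis
    also have "\<dots> = (\<Sum>e\<in>E. c e x * B e y)" using lin_finsum[OF l1] .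
    finally show ?thesis .
  qed
  have eq: "(\<Sum>(x,y)\<leftarrow>t. c e x * B e y) = (\<Sum>(x,y)\<leftarrow>u. c e x * B e y)" if "e \<in> E" for e
    using t E(2) that l2 unfolding teq2_def by (simp add: cfun_lin_iff vX vY)
  have "(\<Sum>(x,y)\<leftarrow>t. B x y) = (\<Sum>(x,y)\<leftarrow>t. \<Sum>e\<in>E. c e x * B e y)"
    by (rule arg_cong[where f=sum_list], rule map_cong) (simp, clarsimp, rule dec, force)
  also have "\<dots> = (\<Sum>e\<in>E. \<Sum>(x,y)\<leftarrow>t. c e x * B e y)"
    by (simp add: split_def sum_list_sum_swap)
  also have "\<dots> = (\<Sum>e\<in>E. \<Sum>(x,y)\<leftarrow>u. c e x * B e y)" using eq by simp
  also have "\<dots> = (\<Sum>(x,y)\<leftarrow>u. \<Sum>e\<in>E. c e x * B e y)"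
    by (simp add: split_def sum_list_sum_swap)
  also have "\<dots> = (\<Sum>(x,y)\<leftarrow>u. B x y)"
    by (rule arg_cong[where f=sum_list], rule map_cong) (simp, clarsimp, rule dec[symmetric], force)
  finally show ?thesis .
qed


lemma E3:
  assumes vX: "vector_space sX" and vY: "vector_space sY" and vZ: "vector_space sZ"
    and t: "teq3 sX sY sZ t u"
    and l1: "\<And>y z. lin sX (\<lambda>x. T x y z)" and l2: "\<And>x z. lin sY (\<lambda>y. T x y z)"
    and l3: "\<And>x y. lin sZ (T x y)"
  shows "(\<Sum>(x,y,z)\<leftarrow>t. T x y z) = (\<Sum>(x,y,z)\<leftarrow>u. T x y z)"
proof -
  obtain E c where E: "finite E" "\<forall>e\<in>E. lin sX (c e)" "\<forall>x\<in>fst ` set (t @ u). x = (\<Sum>e\<in>E. sX (c e x) e)"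
    using coords[OF vX, of "fst ` set (t @ u)"] by blast
  obtain D d where D: "finite D" "\<forall>e\<in>D. lin sY (d e)" "\<forall>x\<in>(fst \<circ> snd) ` set (t @ u). x = (\<Sum>e\<in>D. sY (d e x) e)"
    using coords[OF vY, of "(fst \<circ> snd) ` set (t @ u)"] by blast
  have dec: "T x y z = (\<Sum>e\<in>E. \<Sum>k\<in>D. c e x * d k y * T e k z)"
    if "(x,y,z) \<in> set (t @ u)" for x y z
  proof -
    have x: "x \<in> fst ` set (t @ u)" using that by force
    have y: "y \<in> (fst \<circ> snd) ` set (t @ u)" using that by force
    have "T x y z = T (\<Sum>e\<in>E. sX (c e x) e) y z" using E(3) x by metis
    also have "\<dots> = (\<Sum>e\<in>E. c e x * T e y z)" using lin_finsum[OF l1] .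
    also have "\<dots> = (\<Sum>e\<in>E. c e x * T e (\<Sum>k\<in>D. sY (d k y) k) z)" using D(3) y by metis
    also have "\<dots> = (\<Sum>e\<in>E. c e x * (\<Sum>k\<in>D. d k y * T e k z))" by (simp only: lin_finsum[OF l2])
    also have "\<dots> = (\<Sum>e\<in>E. \<Sum>k\<in>D. c e x * d k y * T e k z)"
      by (simp add: sum_distrib_left mult.assoc)
    finally show ?thesis .
  qed
  have eq: "(\<Sum>(x,y,z)\<leftarrow>t. c e x * d k y * T e k z) = (\<Sum>(x,y,z)\<leftarrow>u. c e x * d k y * T e k z)"
    if "e \<in> E" "k \<in> D" for e k
    using t E(2) D(2) that l3 unfolding teq3_def by (simp add: cfun_lin_iff vX vY vZ)
  have "(\<Sum>(x,y,z)\<leftarrow>t. T x y z) = (\<Sum>(x,y,z)\<leftarrow>t. \<Sum>e\<in>E. \<Sum>k\<in>D. c e x * d k y * T e k z)"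
    by (rule arg_cong[where f=sum_list], rule map_cong) (simp, clarsimp, rule dec, force)
  also have "\<dots> = (\<Sum>e\<in>E. \<Sum>k\<in>D. \<Sum>(x,y,z)\<leftarrow>t. c e x * d k y * T e k z)"
    by (simp only: split_def sum_list_sum_swap)
  also have "\<dots> = (\<Sum>e\<in>E. \<Sum>k\<in>D. \<Sum>(x,y,z)\<leftarrow>u. c e x * d k y * T e k z)" using eq by simp
  also have "\<dots> = (\<Sum>(x,y,z)\<leftarrow>u. \<Sum>e\<in>E. \<Sum>k\<in>D. c e x * d k y * T e k z)"
    by (simp only: split_def sum_list_sum_swap)
  also have "\<dots> = (\<Sum>(x,y,z)\<leftarrow>u. T x y z)"
    by (rule arg_cong[where f=sum_list], rule map_cong) (simp, clarsimp, rule dec[symmetric], force)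
  finally show ?thesis .
qed

lemma separate:
  assumes vX: "vector_space sX" and h: "\<And>f. lin sX f \<Longrightarrow> f a = f b"
  shows "a = b"
proof -
  obtain E c where E: "finite E" "\<forall>e\<in>E. lin sX (c e)" "\<forall>x\<in>{a,b}. x = (\<Sum>e\<in>E. sX (c e x) e)"
    using coords[OF vX, of "{a,b}"] by blast
  have ce: "c e a = c e b" if "e \<in> E" for e using E(2) that h by blast
  have "a = (\<Sum>e\<in>E. sX (c e a) e)" using E(3) by simp
  also have "\<dots> = (\<Sum>e\<in>E. sX (c e b) e)" using ce by simp
  also have "\<dots> = b" using E(3) by simp
  finally show ?thesis .
qed




definition bil :: "(complex \<Rightarrow> 'x::ab_group_add \<Rightarrow> 'x) \<Rightarrow> ('x \<Rightarrow> 'x \<Rightarrow> complex) \<Rightarrow> bool" where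
  "bil s G \<longleftrightarrow> (\<forall>y. lin s (\<lambda>x. G x y)) \<and> (\<forall>x. lin s (\<lambda>y. G x y))"

lemma bilI: "(\<And>y. lin s (\<lambda>x. G x y)) \<Longrightarrow> (\<And>x. lin s (\<lambda>y. G x y)) \<Longrightarrow> bil s G"
  unfolding bil_def by auto

lemma bilD1: "bil s G \<Longrightarrow> lin s (\<lambda>x. G x y)" unfolding bil_def by auto
lemma bilD2: "bil s G \<Longrightarrow> lin s (\<lambda>y. G x y)" unfolding bil_def by auto

lemma lin_sum_list: assumes "lin s f" shows "f (\<Sum>p\<leftarrow>l. g p) = (\<Sum>p\<leftarrow>l. f (g p))"
proof (induct l)
  case Nil then show ?case using lin_zero[OF assms] by simp
next
  case (Cons a l) then show ?case using assms unfolding lin_def by simp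
qed

lemma lin_add: "lin s f \<Longrightarrow> lin s g \<Longrightarrow> lin s (\<lambda>x. f x + g x)"
  unfolding lin_def by (simp add: algebra_simps)

lemma lin_cmult: "lin s f \<Longrightarrow> lin s (\<lambda>x. c * f x)"
  unfolding lin_def by (simp add: algebra_simps)

lemma lin_multc: "lin s f \<Longrightarrow> lin s (\<lambda>x. f x * c)"
  unfolding lin_def by (simp add: algebra_simps)

lemma lin_sumlist2:
  assumes "\<And>u v. (u,v) \<in> set l \<Longrightarrow> lin s (\<lambda>x. F u v x)"
  shows "lin s (\<lambda>x. \<Sum>(u,v)\<leftarrow>l. F u v x)"
  using assms
proof (induct l)
  case Nil then show ?case by (simp add: lin_def)
next
  case (Cons a l)
  then show ?case by (cases a) (auto intro!: lin_add)
qed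

lemma sum_list_concat': "sum_list (map f (concat xss)) = (\<Sum>xs\<leftarrow>xss. sum_list (map f xs))"
  by (induct xss) simp_all

locale hopf =
  fixes sA :: "complex \<Rightarrow> 'a::ring_1 \<Rightarrow> 'a" and \<Delta> :: "'a \<Rightarrow> ('a \<times> 'a) list"
    and \<epsilon> :: "'a \<Rightarrow> complex" and S :: "'a \<Rightarrow> 'a"
  assumes H: "hopf_algebra sA \<Delta> \<epsilon> S"
begin

lemma vsA: "vector_space sA" using H unfolding hopf_algebra_def complex_algebra_def by blast
lemma alg1: "sA c (x * y) = sA c x * y" using H unfolding hopf_algebra_def complex_algebra_def by blast
lemma alg2: "sA c (x * y) = x * sA c y" using H unfolding hopf_algebra_def complex_algebra_def by blast
lemma Dadd: "teq2 sA sA (\<Delta> (x + y)) (\<Delta> x @ \<Delta> y)" using H unfolding hopf_algebra_def by auto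
lemma Dscale: "teq2 sA sA (\<Delta> (sA c x)) (map (\<lambda>(u,v). (sA c u, v)) (\<Delta> x))"
  using H unfolding hopf_algebra_def by auto
lemma Dcoassoc: "teq3 sA sA sA
           (concat (map (\<lambda>(a1,a2). map (\<lambda>(b,c). (b,c,a2)) (\<Delta> a1)) (\<Delta> a)))
           (concat (map (\<lambda>(a1,a2). map (\<lambda>(b,c). (a1,b,c)) (\<Delta> a2)) (\<Delta> a)))"
  using H unfolding hopf_algebra_def by auto
lemma lin_eps: "lin sA \<epsilon>" using H unfolding hopf_algebra_def Vector_Spaces.linear_iff lin_def by auto
lemma counitL: "(\<Sum>(a1,a2)\<leftarrow>\<Delta> a. sA (\<epsilon> a1) a2) = a" using H unfolding hopf_algebra_def by auto
lemma counitR: "(\<Sum>(a1,a2)\<leftarrow>\<Delta> a. sA (\<epsilon> a2) a1) = a" using H unfolding hopf_algebra_def by auto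
lemma Dmult: "teq2 sA sA (\<Delta> (x * y))
           (concat (map (\<lambda>(x1,x2). map (\<lambda>(y1,y2). (x1 * y1, x2 * y2)) (\<Delta> y)) (\<Delta> x)))"
  using H unfolding hopf_algebra_def by auto
lemma Done: "teq2 sA sA (\<Delta> 1) [(1, 1)]" using H unfolding hopf_algebra_def by auto
lemma eps_mult: "\<epsilon> (x * y) = \<epsilon> x * \<epsilon> y" using H unfolding hopf_algebra_def by auto
lemma eps_one: "\<epsilon> 1 = 1" using H unfolding hopf_algebra_def by auto
lemma S_add: "S (x + y) = S x + S y" using H unfolding hopf_algebra_def Vector_Spaces.linear_iff by auto
lemma S_scale: "S (sA c x) = sA c (S x)" using H unfolding hopf_algebra_def Vector_Spaces.linear_iff by auto
lemma antiL: "(\<Sum>(a1,a2)\<leftarrow>\<Delta> a. S a1 * a2) = sA (\<epsilon> a) 1" using H unfolding hopf_algebra_def by auto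
lemma antiR: "(\<Sum>(a1,a2)\<leftarrow>\<Delta> a. a1 * S a2) = sA (\<epsilon> a) 1" using H unfolding hopf_algebra_def by auto

lemma E2A: "teq2 sA sA t u \<Longrightarrow> bil sA G \<Longrightarrow> (\<Sum>(x,y)\<leftarrow>t. G x y) = (\<Sum>(x,y)\<leftarrow>u. G x y)"
  by (rule E2[OF vsA vsA]) (auto simp: bil_def)

lemma sw_add: "bil sA G \<Longrightarrow> (\<Sum>(p,q)\<leftarrow>\<Delta> (x + y). G p q) = (\<Sum>(p,q)\<leftarrow>\<Delta> x. G p q) + (\<Sum>(p,q)\<leftarrow>\<Delta> y. G p q)"
  using E2A[OF Dadd] by simp

lemma sw_scale: "bil sA G \<Longrightarrow> (\<Sum>(p,q)\<leftarrow>\<Delta> (sA c x). G p q) = c * (\<Sum>(p,q)\<leftarrow>\<Delta> x. G p q)"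
proof -
  assume b: "bil sA G"
  have "(\<Sum>(p,q)\<leftarrow>\<Delta> (sA c x). G p q) = (\<Sum>(p,q)\<leftarrow>map (\<lambda>(u,v). (sA c u, v)) (\<Delta> x). G p q)"
    using E2A[OF Dscale b] .
  also have "\<dots> = (\<Sum>(p,q)\<leftarrow>\<Delta> x. c * G p q)"
    using bilD1[OF b] unfolding lin_def by (simp add: split_def comp_def)
  also have "\<dots> = c * (\<Sum>(p,q)\<leftarrow>\<Delta> x. G p q)"
    by (simp add: split_def sum_list_const_mult)
  finally show ?thesis .
qed

lemma lin_sw: "bil sA G \<Longrightarrow> lin sA (\<lambda>z. \<Sum>(p,q)\<leftarrow>\<Delta> z. G p q)"
  unfolding lin_def using sw_add sw_scale by blast

lemma coassoc:
  assumes l1: "\<And>y z. lin sA (\<lambda>x. T x y z)" and l2: "\<And>x z. lin sA (\<lambda>y. T x y z)"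
    and l3: "\<And>x y. lin sA (\<lambda>z. T x y z)"
  shows "(\<Sum>(x,y)\<leftarrow>\<Delta> a. \<Sum>(u,v)\<leftarrow>\<Delta> x. T u v y) = (\<Sum>(x,y)\<leftarrow>\<Delta> a. \<Sum>(u,v)\<leftarrow>\<Delta> y. T x u v)"
proof -
  have "(\<Sum>(x,y,z)\<leftarrow>(concat (map (\<lambda>(a1,a2). map (\<lambda>(b,c). (b,c,a2)) (\<Delta> a1)) (\<Delta> a))). T x y z)
      = (\<Sum>(x,y,z)\<leftarrow>(concat (map (\<lambda>(a1,a2). map (\<lambda>(b,c). (a1,b,c)) (\<Delta> a2)) (\<Delta> a))). T x y z)"
    by (rule E3[OF vsA vsA vsA Dcoassoc l1 l2 l3])
  then show ?thesis
    by (simp add: sum_list_concat' comp_def split_def)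
qed

lemma mult:
  assumes "bil sA G"
  shows "(\<Sum>(p,q)\<leftarrow>\<Delta> (x * y). G p q) = (\<Sum>(x1,x2)\<leftarrow>\<Delta> x. \<Sum>(y1,y2)\<leftarrow>\<Delta> y. G (x1 * y1) (x2 * y2))"
  using E2A[OF Dmult assms] by (simp add: sum_list_concat' comp_def split_def)

lemma one: "bil sA G \<Longrightarrow> (\<Sum>(p,q)\<leftarrow>\<Delta> 1. G p q) = G 1 1"
  using E2A[OF Done] by simp

lemma lin_counitL: "lin sA f \<Longrightarrow> (\<Sum>(a1,a2)\<leftarrow>\<Delta> a. \<epsilon> a1 * f a2) = f a"
proof -
  assume l: "lin sA f"
  have "f a = f (\<Sum>(a1,a2)\<leftarrow>\<Delta> a. sA (\<epsilon> a1) a2)" using counitL by simp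
  also have "\<dots> = (\<Sum>(a1,a2)\<leftarrow>\<Delta> a. \<epsilon> a1 * f a2)"
    by (simp add: lin_sum_list[OF l] split_def) (simp add: l[unfolded lin_def])
  finally show ?thesis by simp
qed

lemma lin_counitR: "lin sA f \<Longrightarrow> (\<Sum>(a1,a2)\<leftarrow>\<Delta> a. \<epsilon> a2 * f a1) = f a"
proof -
  assume l: "lin sA f"
  have "f a = f (\<Sum>(a1,a2)\<leftarrow>\<Delta> a. sA (\<epsilon> a2) a1)" using counitR by simp
  also have "\<dots> = (\<Sum>(a1,a2)\<leftarrow>\<Delta> a. \<epsilon> a2 * f a1)"
    by (simp add: lin_sum_list[OF l] split_def) (simp add: l[unfolded lin_def])
  finally show ?thesis by simp
qed

definition linA :: "('a \<Rightarrow> 'a) \<Rightarrow> bool" where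
  "linA g \<longleftrightarrow> (\<forall>x y. g (x + y) = g x + g y) \<and> (\<forall>c x. g (sA c x) = sA c (g x))"

lemma lin_comp: "lin sA f \<Longrightarrow> linA g \<Longrightarrow> lin sA (\<lambda>x. f (g x))"
  unfolding lin_def linA_def by simp

lemma linA_id: "linA (\<lambda>x. x)" unfolding linA_def by simp
lemma linA_S: "linA S" unfolding linA_def by (simp add: S_add S_scale)
lemma linA_multR: "linA g \<Longrightarrow> linA (\<lambda>x. g x * k)"
  unfolding linA_def by (simp add: algebra_simps alg1)
lemma linA_multL: "linA g \<Longrightarrow> linA (\<lambda>x. k * g x)"
  unfolding linA_def by (simp add: algebra_simps alg2)
lemma linA_S': "linA g \<Longrightarrow> linA (\<lambda>x. S (g x))"
  unfolding linA_def by (simp add: S_add S_scale)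

lemmas linA_rules = linA_id linA_S linA_multR linA_multL linA_S'

lemma bil_L: "bil sA C \<Longrightarrow> linA g \<Longrightarrow> lin sA (\<lambda>x. C (g x) m)"
  by (rule lin_comp[OF bilD1])
lemma bil_R: "bil sA C \<Longrightarrow> linA g \<Longrightarrow> lin sA (\<lambda>x. C m (g x))"
  by (rule lin_comp[OF bilD2])
lemma lin_L: "lin sA f \<Longrightarrow> linA g \<Longrightarrow> lin sA (\<lambda>x. f (g x))"
  by (rule lin_comp)

end



lemma sum_list_swap: fixes f :: "'x \<Rightarrow> 'y \<Rightarrow> 'c::comm_monoid_add" shows "(\<Sum>x\<leftarrow>l1. \<Sum>y\<leftarrow>l2. f x y) = (\<Sum>y\<leftarrow>l2. \<Sum>x\<leftarrow>l1. f x y)"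
  by (induct l1) (simp_all add: sum_list_addf)

lemma sum_list_swap2: fixes F :: "'x \<Rightarrow> 'y \<Rightarrow> 'z \<Rightarrow> 'w \<Rightarrow> 'c::comm_monoid_add" shows "(\<Sum>(a,b)\<leftarrow>l1. \<Sum>(c,d)\<leftarrow>l2. F a b c d) = (\<Sum>(c,d)\<leftarrow>l2. \<Sum>(a,b)\<leftarrow>l1. F a b c d)"
  by (simp only: split_def sum_list_swap[of "\<lambda>x y. F (fst x) (snd x) (fst y) (snd y)"])

context hopf begin

lemma contractDR:
  assumes bC: "bil sA C"
  shows "(\<Sum>(y1,y2)\<leftarrow>\<Delta> y. \<Sum>(u,u')\<leftarrow>\<Delta> y1. \<Sum>(w,w')\<leftarrow>\<Delta> y2. C (u * S w') (u' * S w)) = \<epsilon> y * C 1 1"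
proof -
  define T where "T x y z = (\<Sum>(w,w')\<leftarrow>\<Delta> z. C (x * S w') (y * S w))" for x y z
  have l1: "lin sA (\<lambda>x. T x y z)" for y z unfolding T_def
    by (auto intro!: lin_sumlist2 bil_L[OF bC] bil_R[OF bC] linA_rules)
  have l2: "lin sA (\<lambda>y. T x y z)" for x z unfolding T_def
    by (auto intro!: lin_sumlist2 bil_L[OF bC] bil_R[OF bC] linA_rules)
  have l3: "lin sA (\<lambda>z. T x y z)" for x y unfolding T_def
    by (auto intro!: lin_sw bilI bil_L[OF bC] bil_R[OF bC] linA_rules)
  have "(\<Sum>(y1,y2)\<leftarrow>\<Delta> y. \<Sum>(u,u')\<leftarrow>\<Delta> y1. \<Sum>(w,w')\<leftarrow>\<Delta> y2. C (u * S w') (u' * S w))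
      = (\<Sum>(y1,y2)\<leftarrow>\<Delta> y. \<Sum>(u,u')\<leftarrow>\<Delta> y1. T u u' y2)" unfolding T_def ..
  also have "\<dots> = (\<Sum>(a1,a2)\<leftarrow>\<Delta> y. \<Sum>(v,v')\<leftarrow>\<Delta> a2. T a1 v v')"
    by (rule coassoc[OF l1 l2 l3])
  also have "\<dots> = (\<Sum>(a1,a2)\<leftarrow>\<Delta> y. C (a1 * S a2) 1)"
  proof -
    have inner: "(\<Sum>(v,v')\<leftarrow>\<Delta> a2. T a1 v v') = C (a1 * S a2) 1" for a1 a2
    proof -
      define T' where "T' x y z = C (a1 * S z) (x * S y)" for x y z
      have m1: "lin sA (\<lambda>x. T' x y z)" for y z unfolding T'_def
        by (auto intro!: bil_L[OF bC] bil_R[OF bC] linA_rules)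
      have m2: "lin sA (\<lambda>y. T' x y z)" for x z unfolding T'_def
        by (auto intro!: bil_L[OF bC] bil_R[OF bC] linA_rules)
      have m3: "lin sA (\<lambda>z. T' x y z)" for x y unfolding T'_def
        by (auto intro!: bil_L[OF bC] bil_R[OF bC] linA_rules)
      have "(\<Sum>(v,v')\<leftarrow>\<Delta> a2. T a1 v v') = (\<Sum>(v,v')\<leftarrow>\<Delta> a2. \<Sum>(w,w')\<leftarrow>\<Delta> v'. T' v w w')"
        unfolding T_def T'_def ..
      also have "\<dots> = (\<Sum>(x,y)\<leftarrow>\<Delta> a2. \<Sum>(u,v)\<leftarrow>\<Delta> x. T' u v y)"
        by (rule coassoc[OF m1 m2 m3, symmetric])
      also have "\<dots> = (\<Sum>(x,y)\<leftarrow>\<Delta> a2. \<epsilon> x * C (a1 * S y) 1)"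
      proof -
        have "(\<Sum>(u,v)\<leftarrow>\<Delta> x. T' u v y) = \<epsilon> x * C (a1 * S y) 1" for x y
        proof -
          have "(\<Sum>(u,v)\<leftarrow>\<Delta> x. T' u v y) = C (a1 * S y) (\<Sum>(u,v)\<leftarrow>\<Delta> x. u * S v)"
            unfolding T'_def by (simp add: lin_sum_list[OF bilD2[OF bC]] split_def)
          also have "\<dots> = \<epsilon> x * C (a1 * S y) 1"
            using antiR bilD2[OF bC] unfolding lin_def by simp
          finally show ?thesis .
        qed
        then show ?thesis by simp
      qed
      also have "\<dots> = C (a1 * S a2) 1"
        by (rule lin_counitL) (auto intro!: bil_L[OF bC] linA_rules)
      finally show ?thesis .
    qed
    show ?thesis by (simp only: inner)
  qed
  also have "\<dots> = C (\<Sum>(a1,a2)\<leftarrow>\<Delta> y. a1 * S a2) 1"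
    by (simp add: lin_sum_list[OF bilD1[OF bC]] split_def)
  also have "\<dots> = \<epsilon> y * C 1 1"
    using antiR bilD1[OF bC] unfolding lin_def by simp
  finally show ?thesis .
qed


lemma anticomult:
  assumes bB: "bil sA B"
  shows "(\<Sum>(p,q)\<leftarrow>\<Delta> (S a). B p q) = (\<Sum>(x,y)\<leftarrow>\<Delta> a. B (S y) (S x))"
proof -
  define C where "C x m m' = (\<Sum>(p,p')\<leftarrow>\<Delta> (S x). B (p * m) (p' * m'))" for x m m'
  have bBm: "bil sA (\<lambda>p p'. B (p * m) (p' * m'))" for m m'
    by (auto intro!: bilI bil_L[OF bB] bil_R[OF bB] linA_rules)
  have bC: "bil sA (C x)" for x unfolding C_def
    by (auto intro!: bilI lin_sumlist2 bil_L[OF bB] bil_R[OF bB] linA_rules)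
  have linCx: "lin sA (\<lambda>x. C x m m')" for m m' unfolding C_def
    using lin_comp[OF lin_sw[OF bBm] linA_S] by simp
  define L where "L a = (\<Sum>(p,q)\<leftarrow>\<Delta> (S a). B p q)" for a
  have linL: "lin sA L" unfolding L_def
    using lin_comp[OF lin_sw[OF bB] linA_S] by simp
  have LC: "L x = C x 1 1" for x unfolding L_def C_def by simp
  define R where "R a = (\<Sum>(x,y)\<leftarrow>\<Delta> a. B (S y) (S x))" for a
  have bR: "bil sA (\<lambda>x y. B (S y) (S x))"
    by (auto intro!: bilI bil_L[OF bB] bil_R[OF bB] linA_rules)
  have linR: "lin sA R" unfolding R_def by (rule lin_sw[OF bR])
  define H where "H x y z = (\<Sum>(u,u')\<leftarrow>\<Delta> y. \<Sum>(w,w')\<leftarrow>\<Delta> z. C x (u * S w') (u' * S w))" for x y z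
  have h1: "lin sA (\<lambda>x. H x y z)" for y z unfolding H_def
    by (auto intro!: lin_sumlist2 linCx)
  have h2: "lin sA (\<lambda>y. H x y z)" for x z unfolding H_def
    by (auto intro!: lin_sw bilI lin_sumlist2 bil_L[OF bC] bil_R[OF bC] linA_rules)
  have h3: "lin sA (\<lambda>z. H x y z)" for x y unfolding H_def
    by (auto intro!: lin_sumlist2 lin_sw bilI bil_L[OF bC] bil_R[OF bC] linA_rules)
  have "L a = (\<Sum>(a1,a2)\<leftarrow>\<Delta> a. \<epsilon> a2 * L a1)" using lin_counitR[OF linL] by simp
  also have "\<dots> = (\<Sum>(a1,a2)\<leftarrow>\<Delta> a. \<Sum>(y1,y2)\<leftarrow>\<Delta> a2. H a1 y1 y2)"
  proof -
    have "\<epsilon> y * L x = (\<Sum>(y1,y2)\<leftarrow>\<Delta> y. H x y1 y2)" for x y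
      unfolding H_def LC using contractDR[OF bC, of x y] by simp
    then show ?thesis by (simp only:)
  qed
  also have "\<dots> = (\<Sum>(a1,a2)\<leftarrow>\<Delta> a. \<Sum>(x1,x2)\<leftarrow>\<Delta> a1. H x1 x2 a2)"
    by (rule coassoc[OF h1 h2 h3, symmetric])
  also have "\<dots> = (\<Sum>(a1,a2)\<leftarrow>\<Delta> a. \<epsilon> a1 * R a2)"
  proof -
    have "(\<Sum>(x1,x2)\<leftarrow>\<Delta> a1. H x1 x2 a2) = \<epsilon> a1 * R a2" for a1 a2
    proof -
      define D where "D m m' = (\<Sum>(w,w')\<leftarrow>\<Delta> a2. B (m * S w') (m' * S w))" for m m'
      have bD: "bil sA D" unfolding D_def
        by (auto intro!: bilI lin_sumlist2 bil_L[OF bB] bil_R[OF bB] linA_rules)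
      have sw1: "(\<Sum>(w,w')\<leftarrow>\<Delta> a2. C x1 (u * S w') (u' * S w)) = (\<Sum>(p,p')\<leftarrow>\<Delta> (S x1). D (p*u) (p'*u'))"
        for x1 u u' unfolding C_def D_def by (subst sum_list_swap2) (simp add: mult.assoc)
      have "(\<Sum>(x1,x2)\<leftarrow>\<Delta> a1. H x1 x2 a2)
          = (\<Sum>(x1,x2)\<leftarrow>\<Delta> a1. \<Sum>(u,u')\<leftarrow>\<Delta> x2. \<Sum>(p,p')\<leftarrow>\<Delta> (S x1). D (p*u) (p'*u'))"
        unfolding H_def sw1 ..
      also have "\<dots> = (\<Sum>(x1,x2)\<leftarrow>\<Delta> a1. \<Sum>(p,p')\<leftarrow>\<Delta> (S x1). \<Sum>(u,u')\<leftarrow>\<Delta> x2. D (p*u) (p'*u'))"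
        by (subst sum_list_swap2) (rule refl)
      also have "\<dots> = (\<Sum>(x1,x2)\<leftarrow>\<Delta> a1. \<Sum>(p,q)\<leftarrow>\<Delta> (S x1 * x2). D p q)"
        by (simp only: mult[OF bD])
      also have "\<dots> = (\<Sum>(p,q)\<leftarrow>\<Delta> (\<Sum>(x1,x2)\<leftarrow>\<Delta> a1. S x1 * x2). D p q)"
        using lin_sum_list[OF lin_sw[OF bD], where g="\<lambda>(x1,x2). S x1 * x2" and l="\<Delta> a1"]
        by (simp add: split_def)
      also have "\<dots> = \<epsilon> a1 * D 1 1"
        by (simp add: antiL sw_scale[OF bD] one[OF bD])
      also have "\<dots> = \<epsilon> a1 * R a2" unfolding D_def R_def by simp
      finally show ?thesis .
    qed
    then show ?thesis by (simp only:)
  qed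
  also have "\<dots> = R a" by (rule lin_counitL[OF linR])
  finally show ?thesis unfolding L_def R_def .
qed

end



context hopf begin

lemma eps_S: "\<epsilon> (S a) = \<epsilon> a"
proof -
  have "\<epsilon> a = \<epsilon> (sA (\<epsilon> a) 1)" using lin_eps eps_one unfolding lin_def by simp
  also have "\<dots> = \<epsilon> (\<Sum>(a1,a2)\<leftarrow>\<Delta> a. a1 * S a2)" by (simp add: antiR)
  also have "\<dots> = (\<Sum>(a1,a2)\<leftarrow>\<Delta> a. \<epsilon> a1 * \<epsilon> (S a2))"
    by (simp add: lin_sum_list[OF lin_eps] split_def eps_mult)
  also have "\<dots> = \<epsilon> (S a)"
    by (rule lin_counitL) (rule lin_comp[OF lin_eps linA_S])
  finally show ?thesis by simp
qed

lemma antiSwap: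
  assumes SS: "\<forall>x. S (S x) = x"
  shows "(\<Sum>(x,y)\<leftarrow>\<Delta> a. S y * x) = sA (\<epsilon> a) 1"
proof (rule separate[OF vsA])
  fix h assume h: "lin sA h"
  have bB: "bil sA (\<lambda>p q. h (p * S q))"
    by (auto intro!: bilI lin_comp[OF h] linA_rules)
  have "h (\<Sum>(x,y)\<leftarrow>\<Delta> a. S y * x) = (\<Sum>(x,y)\<leftarrow>\<Delta> a. h (S y * S (S x)))"
    using SS by (simp add: lin_sum_list[OF h] split_def)
  also have "\<dots> = (\<Sum>(p,q)\<leftarrow>\<Delta> (S a). h (p * S q))"
    by (rule anticomult[OF bB, symmetric])
  also have "\<dots> = h (\<Sum>(p,q)\<leftarrow>\<Delta> (S a). p * S q)"
    by (simp add: lin_sum_list[OF h] split_def)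
  also have "\<dots> = h (sA (\<epsilon> a) 1)" by (simp add: antiR eps_S)
  finally show "h (\<Sum>(x,y)\<leftarrow>\<Delta> a. S y * x) = h (sA (\<epsilon> a) 1)" .
qed

end

locale hopf_rep = hopf sA \<Delta> \<epsilon> S
  for sA :: "complex \<Rightarrow> 'a::ring_1 \<Rightarrow> 'a" and \<Delta> and \<epsilon> and S +
  fixes sV :: "complex \<Rightarrow> 'v::ab_group_add \<Rightarrow> 'v" and \<rho> :: "'a \<Rightarrow> 'v \<Rightarrow> 'v"
  assumes R: "representation sA sV \<rho>"
begin

lemma vsV: "vector_space sV" using R unfolding representation_def by auto
lemma rho_add2: "\<rho> k (v + w) = \<rho> k v + \<rho> k w"
  using R unfolding representation_def Vector_Spaces.linear_iff by auto
lemma rho_scale2: "\<rho> k (sV c w) = sV c (\<rho> k w)"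
  using R unfolding representation_def Vector_Spaces.linear_iff by auto
lemma rho_add: "\<rho> (x + y) v = \<rho> x v + \<rho> y v" using R unfolding representation_def by auto
lemma rho_scale: "\<rho> (sA c x) v = sV c (\<rho> x v)" using R unfolding representation_def by auto
lemma rho_mult: "\<rho> (x * y) v = \<rho> x (\<rho> y v)" using R unfolding representation_def by auto
lemma rho_one: "\<rho> 1 v = v" using R unfolding representation_def by auto

lemma lin_g_rho2: "lin sV g \<Longrightarrow> lin sV (\<lambda>w. g (\<rho> k w))"
  unfolding lin_def by (simp add: rho_add2 rho_scale2)
lemma lin_g_rho1: "lin sV g \<Longrightarrow> linA h \<Longrightarrow> lin sA (\<lambda>q. g (\<rho> (h q) w))"
  unfolding lin_def linA_def by (simp add: rho_add rho_scale)


lemma dir1: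
  assumes SS: "\<forall>x. S (S x) = x" and a: "a \<in> T_l sA sV \<Delta> \<rho> \<phi>"
  shows "S a \<in> T_r sA sV \<Delta> \<rho> \<phi>"
proof -
  have ta: "teq2 sV sA (map (\<lambda>(a1,a2). (\<rho> a1 \<phi>, a2)) (\<Delta> a)) [(\<phi>, a)]"
    using a unfolding T_l_def by simp
  have main: "(\<Sum>(p,q)\<leftarrow>\<Delta> (S a). f p * g (\<rho> q \<phi>)) = f (S a) * g \<phi>"
    if f: "lin sA f" and g: "lin sV g" for f g
  proof -
    have bB: "bil sA (\<lambda>p q. f p * g (\<rho> q \<phi>))"
      by (auto intro!: bilI lin_multc[OF f] lin_cmult lin_g_rho1[OF g] linA_rules)
    define K where "K x y z = f (S z) * g (\<rho> (S y) (\<rho> x \<phi>))" for x y z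
    have k1: "lin sA (\<lambda>x. K x y z)" for y z unfolding K_def
      by (auto intro!: lin_cmult lin_g_rho1[OF lin_g_rho2[OF g]] linA_rules)
    have k2: "lin sA (\<lambda>y. K x y z)" for x z unfolding K_def
      by (auto intro!: lin_cmult lin_g_rho1[OF g] linA_rules)
    have k3: "lin sA (\<lambda>z. K x y z)" for x y unfolding K_def
      by (auto intro!: lin_multc lin_comp[OF f] linA_rules)
    define \<beta> where "\<beta> w y = (\<Sum>(u,v)\<leftarrow>\<Delta> y. f (S v) * g (\<rho> (S u) w))" for w y
    have b1: "lin sV (\<lambda>w. \<beta> w y)" for y unfolding \<beta>_def
      by (auto intro!: lin_sumlist2 lin_cmult lin_g_rho2[OF g])
    have b2: "lin sA (\<lambda>y. \<beta> w y)" for w unfolding \<beta>_def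
      by (auto intro!: lin_sw bilI lin_cmult lin_multc lin_g_rho1[OF g] lin_comp[OF f] linA_rules)
    have "(\<Sum>(p,q)\<leftarrow>\<Delta> (S a). f p * g (\<rho> q \<phi>)) = \<beta> \<phi> a"
      unfolding \<beta>_def by (rule anticomult[OF bB])
    also have "\<dots> = (\<Sum>(w,y)\<leftarrow>map (\<lambda>(a1,a2). (\<rho> a1 \<phi>, a2)) (\<Delta> a). \<beta> w y)"
      using E2[OF vsV vsA ta, of \<beta>, OF b1 b2] by simp
    also have "\<dots> = (\<Sum>(x,y)\<leftarrow>\<Delta> a. \<Sum>(u,v)\<leftarrow>\<Delta> y. K x u v)"
      unfolding K_def \<beta>_def by (simp add: split_def comp_def)
    also have "\<dots> = (\<Sum>(x,y)\<leftarrow>\<Delta> a. \<Sum>(u,v)\<leftarrow>\<Delta> x. K u v y)"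
      by (rule coassoc[OF k1 k2 k3, symmetric])
    also have "\<dots> = (\<Sum>(x,y)\<leftarrow>\<Delta> a. \<epsilon> x * f (S y)) * g \<phi>"
    proof -
      have lg: "lin sA (\<lambda>q. g (\<rho> q \<phi>))" by (rule lin_g_rho1[OF g linA_id])
      have "(\<Sum>(u,v)\<leftarrow>\<Delta> x. K u v y) = \<epsilon> x * f (S y) * g \<phi>" for x y
      proof -
        have "(\<Sum>(u,v)\<leftarrow>\<Delta> x. K u v y) = f (S y) * (\<Sum>(u,v)\<leftarrow>\<Delta> x. g (\<rho> (S v * u) \<phi>))"
          unfolding K_def by (simp add: rho_mult split_def sum_list_const_mult)
        also have "\<dots> = f (S y) * g (\<rho> (\<Sum>(u,v)\<leftarrow>\<Delta> x. S v * u) \<phi>)"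
          using lin_sum_list[OF lg, where g="\<lambda>(u,v). S v * u" and l="\<Delta> x"] by (simp add: split_def)
        also have "\<dots> = \<epsilon> x * f (S y) * g \<phi>"
          using g unfolding lin_def by (simp add: antiSwap[OF SS] rho_scale rho_one)
        finally show ?thesis .
      qed
      then show ?thesis by (simp add: split_def sum_list_const_mult[symmetric] mult.commute)
    qed
    also have "\<dots> = f (S a) * g \<phi>"
      using lin_counitL[OF lin_comp[OF f linA_S]] by simp
    finally show ?thesis .
  qed
  show ?thesis unfolding T_r_def teq2_def
    by (auto simp: cfun_lin_iff vsA vsV split_def comp_def main[unfolded split_def])
qed

lemma dir2:
  assumes a: "a \<in> T_r sA sV \<Delta> \<rho> \<phi>"
  shows "S a \<in> T_l sA sV \<Delta> \<rho> \<phi>"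
proof -
  have ta: "teq2 sA sV (map (\<lambda>(a1,a2). (a1, \<rho> a2 \<phi>)) (\<Delta> a)) [(a, \<phi>)]"
    using a unfolding T_r_def by simp
  have main: "(\<Sum>(p,q)\<leftarrow>\<Delta> (S a). g (\<rho> p \<phi>) * f q) = g \<phi> * f (S a)"
    if f: "lin sA f" and g: "lin sV g" for f g
  proof -
    have bB: "bil sA (\<lambda>p q. g (\<rho> p \<phi>) * f q)"
      by (auto intro!: bilI lin_cmult[OF f] lin_multc lin_g_rho1[OF g] linA_rules)
    define K where "K x y z = g (\<rho> (S y) (\<rho> z \<phi>)) * f (S x)" for x y z
    have k1: "lin sA (\<lambda>x. K x y z)" for y z unfolding K_def
      by (auto intro!: lin_cmult lin_comp[OF f] linA_rules)
    have k2: "lin sA (\<lambda>y. K x y z)" for x z unfolding K_def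
      by (auto intro!: lin_multc lin_g_rho1[OF g] linA_rules)
    have k3: "lin sA (\<lambda>z. K x y z)" for x y unfolding K_def
      by (auto intro!: lin_multc lin_g_rho1[OF lin_g_rho2[OF g]] linA_rules)
    define \<beta> where "\<beta> x w = (\<Sum>(u,v)\<leftarrow>\<Delta> x. g (\<rho> (S v) w) * f (S u))" for x w
    have b1: "lin sA (\<lambda>x. \<beta> x w)" for w unfolding \<beta>_def
      by (auto intro!: lin_sw bilI lin_cmult lin_multc lin_g_rho1[OF g] lin_comp[OF f] linA_rules)
    have b2: "lin sV (\<lambda>w. \<beta> x w)" for x unfolding \<beta>_def
      by (auto intro!: lin_sumlist2 lin_multc lin_g_rho2[OF g])
    have "(\<Sum>(p,q)\<leftarrow>\<Delta> (S a). g (\<rho> p \<phi>) * f q) = \<beta> a \<phi>"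
      unfolding \<beta>_def by (rule anticomult[OF bB])
    also have "\<dots> = (\<Sum>(x,w)\<leftarrow>map (\<lambda>(a1,a2). (a1, \<rho> a2 \<phi>)) (\<Delta> a). \<beta> x w)"
      using E2[OF vsA vsV ta, of \<beta>, OF b1 b2] by simp
    also have "\<dots> = (\<Sum>(x,y)\<leftarrow>\<Delta> a. \<Sum>(u,v)\<leftarrow>\<Delta> x. K u v y)"
      unfolding K_def \<beta>_def by (simp add: split_def comp_def)
    also have "\<dots> = (\<Sum>(x,y)\<leftarrow>\<Delta> a. \<Sum>(u,v)\<leftarrow>\<Delta> y. K x u v)"
      by (rule coassoc[OF k1 k2 k3])
    also have "\<dots> = g \<phi> * (\<Sum>(x,y)\<leftarrow>\<Delta> a. \<epsilon> y * f (S x))"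
    proof -
      have lg: "lin sA (\<lambda>q. g (\<rho> q \<phi>))" by (rule lin_g_rho1[OF g linA_id])
      have "(\<Sum>(u,v)\<leftarrow>\<Delta> y. K x u v) = g \<phi> * (\<epsilon> y * f (S x))" for x y
      proof -
        have "(\<Sum>(u,v)\<leftarrow>\<Delta> y. K x u v) = (\<Sum>(u,v)\<leftarrow>\<Delta> y. g (\<rho> (S u * v) \<phi>)) * f (S x)"
          unfolding K_def by (simp add: rho_mult split_def sum_list_mult_const)
        also have "\<dots> = g (\<rho> (\<Sum>(u,v)\<leftarrow>\<Delta> y. S u * v) \<phi>) * f (S x)"
          using lin_sum_list[OF lg, where g="\<lambda>(u,v). S u * v" and l="\<Delta> y"] by (simp add: split_def)
        also have "\<dots> = g \<phi> * (\<epsilon> y * f (S x))"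
          using g unfolding lin_def by (simp add: antiL rho_scale rho_one)
        finally show ?thesis .
      qed
      then show ?thesis by (simp add: split_def sum_list_const_mult[symmetric])
    qed
    also have "\<dots> = g \<phi> * f (S a)"
      using lin_counitR[OF lin_comp[OF f linA_S]] by simp
    finally show ?thesis .
  qed
  show ?thesis unfolding T_l_def teq2_def
    by (auto simp: cfun_lin_iff vsA vsV split_def comp_def main[unfolded split_def])
qed

end


theorem lemma4:
  fixes sA :: "complex \<Rightarrow> 'a::ring_1 \<Rightarrow> 'a"
    and \<Delta> :: "'a \<Rightarrow> ('a \<times> 'a) list"
    and \<epsilon> :: "'a \<Rightarrow> complex"
    and S :: "'a \<Rightarrow> 'a"
    and sV :: "complex \<Rightarrow> 'v::ab_group_add \<Rightarrow> 'v"
    and \<rho> :: "'a \<Rightarrow> 'v \<Rightarrow> 'v"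
    and \<phi> :: 'v
  assumes "hopf_algebra sA \<Delta> \<epsilon> S"
    and "\<forall>a. S (S a) = a"
    and "representation sA sV \<rho>"
  shows "S ` T_l sA sV \<Delta> \<rho> \<phi> = T_r sA sV \<Delta> \<rho> \<phi> \<and> S ` T_r sA sV \<Delta> \<rho> \<phi> = T_l sA sV \<Delta> \<rho> \<phi>"
proof -
  interpret hopf_rep sA \<Delta> \<epsilon> S sV \<rho>
    by (unfold_locales) (fact assms(1), fact assms(3))
  have SS: "\<forall>a. S (S a) = a" by (fact assms(2))
  have a: "S ` T_l sA sV \<Delta> \<rho> \<phi> \<subseteq> T_r sA sV \<Delta> \<rho> \<phi>" using dir1[OF SS] by blast
  have b: "S ` T_r sA sV \<Delta> \<rho> \<phi> \<subseteq> T_l sA sV \<Delta> \<rho> \<phi>" using dir2 by blast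
  have c: "T_r sA sV \<Delta> \<rho> \<phi> \<subseteq> S ` T_l sA sV \<Delta> \<rho> \<phi>"
  proof
    fix x assume "x \<in> T_r sA sV \<Delta> \<rho> \<phi>"
    then have "S x \<in> T_l sA sV \<Delta> \<rho> \<phi>" by (rule dir2)
    then show "x \<in> S ` T_l sA sV \<Delta> \<rho> \<phi>" using SS by (metis image_eqI)
  qed
  have d: "T_l sA sV \<Delta> \<rho> \<phi> \<subseteq> S ` T_r sA sV \<Delta> \<rho> \<phi>"
  proof
    fix x assume "x \<in> T_l sA sV \<Delta> \<rho> \<phi>"
    then have "S x \<in> T_r sA sV \<Delta> \<rho> \<phi>" by (rule dir1[OF SS])
    then show "x \<in> S ` T_r sA sV \<Delta> \<rho> \<phi>" using SS by (metis image_eqI)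
  qed
  show ?thesis using a b c d by blast
qed

end
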